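(* Let $r \ge 3$ and $0 \le k \le n$ be integers, and put $m = \lceil \frac{(r-2)k}{r-1} \rceil$. Let $g^{1\text{-}\mathrm{ff}}_r(n,k)$ be the maximum cardinality of a family $\mathcal{F} \subseteq \binom{[n]}{k}$ containing no $1$-focal family of size $r$. Then $$g^{1\text{-}\mathrm{ff}}_r(n,k) \le (r-1)\,\frac{\binom{n}{m}}{\binom{k}{m}}.$$
   Context: $\binom{[n]}{k}$ is the family of all $k$-element subsets of $[n]=\{1,\dots,n\}$; sets are identified with their characteristic vectors in $\{0,1\}^n$. For $b \in \{0,1\}$, a family $x^{(0)}, x^{(1)}, \dots, x^{(r-1)}$ of $r$ distinct vectors in $\{0,1\}^n$ is $b$-focal with focus $x^{(0)}$ if for every coordinate $i \in [n]$ with $x^{(0)}_i = b$, at least $r-2$ of the $r-1$ entries $x^{(1)}_i, \dots, x^{(r-1)}_i$ are equal to $b$. A family contains a $b$-focal family of size $r$ if some $r$ distinct members, with some choice of focus among them, form a $b$-focal family. *)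

theory Defs
  imports Complex_Main
begin

text \<open>Sets A \<subseteq> {1..n} are identified with their characteristic vectors in {0,1}^n.
  A family of r distinct vectors x0, x1, ..., x(r-1) with focus x0 is represented by the
  focus A = x0 and the set B = {x1, ..., x(r-1)} of the other r-1 (distinct, different from A)
  members. It is b-focal for b = 1 iff for every coordinate i with i in A, at least r-2 of the
  r-1 sets in B contain i, i.e. at most one set in B misses i.\<close>

definition one_focal :: "nat set \<Rightarrow> nat set set \<Rightarrow> bool" where
  "one_focal A B \<longleftrightarrow> (\<forall>i\<in>A. card {S \<in> B. i \<notin> S} \<le> 1)"

definition contains_1_focal :: "nat \<Rightarrow> nat set set \<Rightarrow> bool" where
  "contains_1_focal r F \<longleftrightarrow>
     (\<exists>A B. A \<in> F \<and> B \<subseteq> F \<and> A \<notin> B \<and> finite B \<and> card B = r - 1 \<and> one_focal A B)"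

definition k_subsets :: "nat \<Rightarrow> nat \<Rightarrow> nat set set" where
  "k_subsets n k = {S. S \<subseteq> {1..n} \<and> card S = k}"

definition g_1ff :: "nat \<Rightarrow> nat \<Rightarrow> nat \<Rightarrow> nat" where
  "g_1ff r n k = Max {card F | F. F \<subseteq> k_subsets n k \<and> \<not> contains_1_focal r F}"

end

theory Submission
  imports Defs
begin

definition Dl :: "nat set \<Rightarrow> nat \<Rightarrow> nat \<Rightarrow> nat set list set" where
  "Dl X s t = {L. length L = t \<and> (\<forall>i<t. L!i \<subseteq> X \<and> card (L!i) = s) \<and>
     (\<forall>i<t. \<forall>j<t. i \<noteq> j \<longrightarrow> L!i \<inter> L!j = {})}"

fun gcount :: "nat \<Rightarrow> nat \<Rightarrow> nat \<Rightarrow> nat" where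
  "gcount x s 0 = 1"
| "gcount x s (Suc t) = (x choose s) * gcount (x - s) s t"

lemma gcount_pos: "t * s \<le> x \<Longrightarrow> gcount x s t > 0"
  by (induction t arbitrary: x) auto

lemma Dl_finite: "finite X \<Longrightarrow> finite (Dl X s t)"
proof -
  assume "finite X"
  have "Dl X s t \<subseteq> {xs. set xs \<subseteq> Pow X \<and> length xs = t}"
    unfolding Dl_def by (force simp: in_set_conv_nth)
  then show ?thesis using finite_lists_length_eq[of "Pow X" t] \<open>finite X\<close>
    by (meson finite_Pow_iff finite_subset)
qed

lemma Dl_Suc: "Dl X s (Suc t) = (\<Union>U\<in>{U. U \<subseteq> X \<and> card U = s}. (\<lambda>L. U # L) ` Dl (X - U) s t)"
proof (intro equalityI subsetI)
  fix L assume L: "L \<in> Dl X s (Suc t)"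
  then obtain U L' where LL: "L = U # L'" by (cases L) (auto simp: Dl_def)
  have "L!0 \<subseteq> X \<and> card (L!0) = s" using L by (simp add: Dl_def)
  then have U: "U \<subseteq> X \<and> card U = s" using LL by simp
  have "L' \<in> Dl (X - U) s t"
  proof -
    have "length L' = t" using L LL by (auto simp: Dl_def)
    moreover have "\<forall>i<t. L'!i \<subseteq> X - U \<and> card (L'!i) = s"
    proof (intro allI impI)
      fix i assume "i < t"
      have "L!(Suc i) \<subseteq> X" "card (L!Suc i) = s" "L!0 \<inter> L!Suc i = {}"
        using L \<open>i<t\<close> by (auto simp: Dl_def)
      then show "L'!i \<subseteq> X - U \<and> card (L'!i) = s" using LL by auto
    qed
    moreover have "\<forall>i<t. \<forall>j<t. i \<noteq> j \<longrightarrow> L'!i \<inter> L'!j = {}"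
    proof (intro allI impI)
      fix i j assume "i < t" "j < t" "i \<noteq> j"
      then have "L!Suc i \<inter> L!Suc j = {}" using L by (auto simp: Dl_def)
      then show "L'!i \<inter> L'!j = {}" using LL by auto
    qed
    ultimately show ?thesis by (simp add: Dl_def)
  qed
  then show "L \<in> (\<Union>U\<in>{U. U \<subseteq> X \<and> card U = s}. (\<lambda>L. U # L) ` Dl (X - U) s t)"
    using U LL by auto
next
  fix L assume "L \<in> (\<Union>U\<in>{U. U \<subseteq> X \<and> card U = s}. (\<lambda>L. U # L) ` Dl (X - U) s t)"
  then obtain U L' where U: "U \<subseteq> X" "card U = s" and L': "L' \<in> Dl (X - U) s t" and LL: "L = U # L'"
    by auto
  have len: "length L' = t" and c: "\<forall>i<t. L'!i \<subseteq> X - U \<and> card (L'!i) = s"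
    and d: "\<forall>i<t. \<forall>j<t. i \<noteq> j \<longrightarrow> L'!i \<inter> L'!j = {}" using L' by (auto simp: Dl_def)
  have "\<forall>i<Suc t. L!i \<subseteq> X \<and> card (L!i) = s"
    using U c LL by (auto simp: nth_Cons split: nat.splits)
  moreover have "\<forall>i<Suc t. \<forall>j<Suc t. i \<noteq> j \<longrightarrow> L!i \<inter> L!j = {}"
  proof (intro allI impI)
    fix i j assume ij: "i < Suc t" "j < Suc t" "i \<noteq> j"
    show "L!i \<inter> L!j = {}"
    proof (cases i)
      case 0
      then obtain j' where "j = Suc j'" "j' < t" using ij by (cases j) auto
      then show ?thesis using c 0 LL by auto
    next
      case (Suc i')
      show ?thesis
      proof (cases j)
        case 0 then show ?thesis using c Suc LL ij by auto
      next
        case (Suc j') then show ?thesis using d \<open>i = Suc i'\<close> LL ij by auto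
      qed
    qed
  qed
  ultimately show "L \<in> Dl X s (Suc t)" using len LL by (simp add: Dl_def)
qed

lemma Dl_Suc_sub: "Ow \<subseteq> {U. U \<subseteq> X \<and> card U = s} \<Longrightarrow>
  {L \<in> Dl X s (Suc t). L!0 \<in> Ow} = (\<Union>U\<in>Ow. (\<lambda>L. U # L) ` Dl (X - U) s t)"
  unfolding Dl_Suc by auto

lemma card_Dl_sub:
  assumes "finite X" "Ow \<subseteq> {U. U \<subseteq> X \<and> card U = s}"
  shows "card {L \<in> Dl X s (Suc t). L!0 \<in> Ow} = (\<Sum>U\<in>Ow. card (Dl (X - U) s t))"
proof -
  have fO: "finite Ow" proof (rule finite_subset[of Ow "Pow X"])
    show "Ow \<subseteq> Pow X" using assms(2) by blast
  qed (use assms(1) in simp)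
  have "card (\<Union>U\<in>Ow. (\<lambda>L. U # L) ` Dl (X - U) s t) = (\<Sum>U\<in>Ow. card ((\<lambda>L. U # L) ` Dl (X - U) s t))"
    by (rule card_UN_disjoint) (use fO assms(1) Dl_finite in \<open>simp_all, blast\<close>)
  also have "\<dots> = (\<Sum>U\<in>Ow. card (Dl (X - U) s t))"
    by (rule sum.cong) (auto simp: card_image inj_on_def)
  finally show ?thesis using Dl_Suc_sub[OF assms(2)] by simp
qed

lemma card_Dl: "finite X \<Longrightarrow> card (Dl X s t) = gcount (card X) s t"
proof (induction t arbitrary: X)
  case 0
  have "Dl X s 0 = {[]}" by (auto simp: Dl_def)
  then show ?case by simp
next
  case (Suc t)
  have "Dl X s (Suc t) = {L \<in> Dl X s (Suc t). L!0 \<in> {U. U \<subseteq> X \<and> card U = s}}"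
    by (auto simp: Dl_def)
  then have "card (Dl X s (Suc t)) = (\<Sum>U\<in>{U. U \<subseteq> X \<and> card U = s}. card (Dl (X - U) s t))"
    using card_Dl_sub[OF Suc.prems, of "{U. U \<subseteq> X \<and> card U = s}" s t] by simp
  also have "\<dots> = (\<Sum>U\<in>{U. U \<subseteq> X \<and> card U = s}. gcount (card X - s) s t)"
    by (rule sum.cong) (use Suc in \<open>auto simp: card_Diff_subset finite_subset\<close>)
  also have "\<dots> = (card X choose s) * gcount (card X - s) s t"
    using n_subsets[OF Suc.prems] by simp
  finally show ?case by simp
qed

definition sw :: "nat \<Rightarrow> 'a list \<Rightarrow> 'a list" where
  "sw j L = L[0 := L!j, j := L!0]"

lemma sw_length[simp]: "length (sw j L) = length L"
  by (simp add: sw_def)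

lemma sw_nth: "j < length L \<Longrightarrow> i < length L \<Longrightarrow>
  sw j L ! i = L ! (if i = j then 0 else if i = 0 then j else i)"
  unfolding sw_def by (cases "i = j"; cases "i = 0") (simp_all add: nth_list_update)

lemma sw_sw: "j < length L \<Longrightarrow> sw j (sw j L) = L"
proof (rule nth_equalityI)
  assume j: "j < length L"
  show "length (sw j (sw j L)) = length L" by simp
  fix i assume "i < length (sw j (sw j L))"
  then have i: "i < length L" by simp
  let ?p = "\<lambda>i. if i = j then 0 else if i = (0::nat) then j else i"
  have p: "?p i < length L" using i j by auto
  have "sw j (sw j L) ! i = sw j L ! ?p i" using sw_nth[of j "sw j L" i] i j by simp
  also have "\<dots> = L ! ?p (?p i)" using sw_nth[of j L "?p i"] p j by simp
  also have "?p (?p i) = i" by auto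
  finally show "sw j (sw j L) ! i = L ! i" .
qed

lemma sw_Dl: "j < t \<Longrightarrow> L \<in> Dl X s t \<Longrightarrow> sw j L \<in> Dl X s t"
proof -
  assume j: "j < t" and L: "L \<in> Dl X s t"
  let ?p = "\<lambda>i. if i = j then 0 else if i = (0::nat) then j else i"
  have len: "length L = t" using L by (simp add: Dl_def)
  have p: "\<And>i. i < t \<Longrightarrow> ?p i < t" using j by auto
  have pinj: "\<And>i i'. ?p i = ?p i' \<Longrightarrow> i = i'" by (auto split: if_splits)
  have "\<forall>i<t. sw j L!i \<subseteq> X \<and> card (sw j L!i) = s"
  proof (intro allI impI)
    fix i assume "i < t"
    then have "sw j L ! i = L ! ?p i" using sw_nth[of j L i] j len by simp
    then show "sw j L!i \<subseteq> X \<and> card (sw j L!i) = s" using L p[OF \<open>i<t\<close>] by (simp add: Dl_def)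
  qed
  moreover have "\<forall>i<t. \<forall>i'<t. i \<noteq> i' \<longrightarrow> sw j L!i \<inter> sw j L!i' = {}"
  proof (intro allI impI)
    fix i i' assume "i < t" "i' < t" "i \<noteq> i'"
    then have "sw j L ! i = L ! ?p i" "sw j L ! i' = L ! ?p i'" using sw_nth[of j L i] sw_nth[of j L i'] j len by simp_all
    moreover have "?p i \<noteq> ?p i'" using pinj \<open>i \<noteq> i'\<close> by blast
    ultimately show "sw j L!i \<inter> sw j L!i' = {}" using L p \<open>i < t\<close> \<open>i' < t\<close>
      unfolding Dl_def by simp
  qed
  ultimately show ?thesis using len by (simp add: Dl_def)
qed

lemma swap_card:
  assumes "j < t"
  shows "card {L \<in> Dl X s t. L!j \<in> Ow} = card {L \<in> Dl X s t. L!0 \<in> Ow}"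
proof -
  have len: "\<And>L. L \<in> Dl X s t \<Longrightarrow> length L = t" by (simp add: Dl_def)
  have "bij_betw (sw j) {L \<in> Dl X s t. L!j \<in> Ow} {L \<in> Dl X s t. L!0 \<in> Ow}"
  proof (rule bij_betw_byWitness[where f' = "sw j"])
    show "\<forall>a\<in>{L \<in> Dl X s t. L ! j \<in> Ow}. sw j (sw j a) = a" using assms len sw_sw by auto
    show "\<forall>a\<in>{L \<in> Dl X s t. L ! 0 \<in> Ow}. sw j (sw j a) = a" using assms len sw_sw by auto
    show "sw j ` {L \<in> Dl X s t. L ! j \<in> Ow} \<subseteq> {L \<in> Dl X s t. L ! 0 \<in> Ow}"
    proof
      fix L' assume "L' \<in> sw j ` {L \<in> Dl X s t. L ! j \<in> Ow}"
      then obtain L where L: "L \<in> Dl X s t" "L!j \<in> Ow" and LL: "L' = sw j L" by blast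
      have "sw j L ! 0 = L ! j" using sw_nth[of j L 0] assms len[OF L(1)] by simp
      then show "L' \<in> {L \<in> Dl X s t. L ! 0 \<in> Ow}" using sw_Dl[OF assms L(1)] L LL by simp
    qed
    show "sw j ` {L \<in> Dl X s t. L ! 0 \<in> Ow} \<subseteq> {L \<in> Dl X s t. L ! j \<in> Ow}"
    proof
      fix L' assume "L' \<in> sw j ` {L \<in> Dl X s t. L ! 0 \<in> Ow}"
      then obtain L where L: "L \<in> Dl X s t" "L!0 \<in> Ow" and LL: "L' = sw j L" by blast
      have "sw j L ! j = L ! 0" using sw_nth[of j L j] assms len[OF L(1)] by simp
      then show "L' \<in> {L \<in> Dl X s t. L ! j \<in> Ow}" using sw_Dl[OF assms L(1)] L LL by simp
    qed
  qed
  then show ?thesis by (rule bij_betw_same_card)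
qed

lemma erdos_weak:
  assumes X: "finite X" and Ow: "Ow \<subseteq> {U. U \<subseteq> X \<and> card U = s}"
    and ts: "Suc t * s \<le> card X"
    and cov: "\<forall>L\<in>Dl X s (Suc t). \<exists>j<Suc t. L!j \<in> Ow"
  shows "card X choose s \<le> Suc t * card Ow"
proof -
  define G where "G = gcount (card X - s) s t"
  have Gpos: "G > 0" unfolding G_def by (rule gcount_pos) (use ts in auto)
  have fO: "finite Ow"
  proof (rule finite_subset[of Ow "Pow X"])
    show "Ow \<subseteq> Pow X" using Ow by blast
  qed (use X in simp)
  have c0: "card {L \<in> Dl X s (Suc t). L!0 \<in> Ow} = card Ow * G"
  proof -
    have "card {L \<in> Dl X s (Suc t). L!0 \<in> Ow} = (\<Sum>U\<in>Ow. card (Dl (X - U) s t))"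
      by (rule card_Dl_sub[OF X Ow])
    also have "\<dots> = (\<Sum>U\<in>Ow. G)"
      by (rule sum.cong) (use Ow X in \<open>auto simp: G_def card_Dl card_Diff_subset finite_subset\<close>)
    finally show ?thesis by simp
  qed
  have "(card X choose s) * G = card (Dl X s (Suc t))"
    using card_Dl[OF X, of s "Suc t"] by (simp add: G_def)
  also have "Dl X s (Suc t) = (\<Union>j\<in>{..<Suc t}. {L \<in> Dl X s (Suc t). L!j \<in> Ow})"
    using cov by auto
  also have "card \<dots> \<le> (\<Sum>j\<in>{..<Suc t}. card {L \<in> Dl X s (Suc t). L!j \<in> Ow})"
    by (rule card_UN_le) simp
  also have "\<dots> = (\<Sum>j\<in>{..<Suc t}. card Ow * G)"
  proof (rule sum.cong)
    fix j assume "j \<in> {..<Suc t}"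
    then have "j < Suc t" by simp
    then show "card {L \<in> Dl X s (Suc t). L!j \<in> Ow} = card Ow * G"
      using swap_card[of j "Suc t" X s Ow] c0 by simp
  qed simp
  also have "\<dots> = (Suc t * card Ow) * G" by (simp add: algebra_simps)
  finally have "(card X choose s) * G \<le> (Suc t * card Ow) * G" .
  then show ?thesis using Gpos by simp
qed


lemma m_eq:
  assumes "r \<ge> (3::nat)"
  shows "nat \<lceil>real ((r - 2) * k) / real (r - 1)\<rceil> = k - k div (r - 1)"
proof -
  define q where "q = k div (r - 1)"
  define \<rho> where "\<rho> = k mod (r - 1)"
  have kq: "k = q * (r - 1) + \<rho>" unfolding q_def \<rho>_def by (metis div_mult_mod_eq)
  have rl: "\<rho> < r - 1" unfolding \<rho>_def using assms by simp
  have r1: "real (r - 1) > 0" using assms by simp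
  have e: "real ((r - 2) * k) / real (r - 1) = real (k - q) - real \<rho> / real (r - 1)"
  proof -
    have "real ((r - 2) * k) = real (r - 1) * real k - real k" using assms
      by (simp add: of_nat_diff algebra_simps)
    moreover have "real k = real q * real (r - 1) + real \<rho>" using kq by (metis of_nat_add of_nat_mult)
    moreover have "real (k - q) = real k - real q"
      using of_nat_diff[of q k] div_le_dividend[of k "r - 1"] unfolding q_def by simp
    ultimately show ?thesis using r1 by (simp add: field_simps)
  qed
  have "\<lceil>real ((r - 2) * k) / real (r - 1)\<rceil> = int (k - q)"
  proof (rule ceiling_unique)
    have "real \<rho> / real (r - 1) < 1" using rl r1 by (simp add: divide_less_eq)
    then show "of_int (int (k - q)) - 1 < real ((r - 2) * k) / real (r - 1)" unfolding e by simp
    show "real ((r - 2) * k) / real (r - 1) \<le> of_int (int (k - q))" unfolding e using r1 by simp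
  qed
  then show ?thesis unfolding q_def by simp
qed


lemma own_count:
  assumes r: "r \<ge> 3" and F: "F \<subseteq> k_subsets n k" and nf: "\<not> contains_1_focal r F"
    and A: "A \<in> F" and s: "s = k div (r - 1)"
  shows "k choose s \<le> (r - 1) * card {U. U \<subseteq> A \<and> card U = s \<and> (\<forall>B\<in>F. A - U \<subseteq> B \<longrightarrow> B = A)}"
proof -
  define Ow where "Ow = {U. U \<subseteq> A \<and> card U = s \<and> (\<forall>B\<in>F. A - U \<subseteq> B \<longrightarrow> B = A)}"
  define t where "t = r - 2"
  have rt: "r - 1 = Suc t" unfolding t_def using r by simp
  have Fsub: "\<And>B. B \<in> F \<Longrightarrow> B \<subseteq> {1..n} \<and> card B = k" using F by (auto simp: k_subsets_def)
  have finB: "\<And>B. B \<in> F \<Longrightarrow> finite B" using Fsub finite_subset by blast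
  have fA: "finite A" and cA: "card A = k" using finB[OF A] Fsub[OF A] by auto
  have "card A choose s \<le> Suc t * card Ow"
  proof (rule erdos_weak)
    show "finite A" by (rule fA)
    show "Ow \<subseteq> {U. U \<subseteq> A \<and> card U = s}" unfolding Ow_def by blast
    show "Suc t * s \<le> card A" unfolding cA s rt[symmetric]
      by (metis div_times_less_eq_dividend mult.commute)
    show "\<forall>L\<in>Dl A s (Suc t). \<exists>j<Suc t. L ! j \<in> Ow"
    proof (rule ballI, rule ccontr)
      fix L assume L: "L \<in> Dl A s (Suc t)" and no: "\<not> (\<exists>j<Suc t. L ! j \<in> Ow)"
      have Lc: "\<And>j. j < Suc t \<Longrightarrow> L!j \<subseteq> A \<and> card (L!j) = s" using L by (simp add: Dl_def)
      have Ld: "\<And>i j. i < Suc t \<Longrightarrow> j < Suc t \<Longrightarrow> i \<noteq> j \<Longrightarrow> L!i \<inter> L!j = {}"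
        using L by (simp add: Dl_def)
      have ex: "\<exists>B. B \<in> F \<and> A - L!j \<subseteq> B \<and> B \<noteq> A" if j: "j < Suc t" for j
      proof -
        have "L!j \<notin> Ow" using no j by blast
        then have "\<not> (\<forall>B\<in>F. A - L!j \<subseteq> B \<longrightarrow> B = A)" using Lc[OF j] unfolding Ow_def by simp
        then show ?thesis by blast
      qed
      define Bf where "Bf j = (SOME B. B \<in> F \<and> A - L!j \<subseteq> B \<and> B \<noteq> A)" for j
      have Bf: "Bf j \<in> F \<and> A - L!j \<subseteq> Bf j \<and> Bf j \<noteq> A" if "j < Suc t" for j
        unfolding Bf_def by (rule someI_ex[OF ex[OF that]])
      have inj: "inj_on Bf {..<Suc t}"
      proof (rule inj_onI, rule ccontr)
        fix i j assume i: "i \<in> {..<Suc t}" and j: "j \<in> {..<Suc t}" and e: "Bf i = Bf j" and ne: "i \<noteq> j"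
        have "A \<subseteq> Bf i"
        proof
          fix x assume "x \<in> A"
          have "x \<notin> L!i \<or> x \<notin> L!j" using Ld[of i j] i j ne by auto
          then show "x \<in> Bf i" using Bf[of i] Bf[of j] i j e \<open>x \<in> A\<close> by auto
        qed
        moreover have "card A = card (Bf i)" using cA Fsub Bf[of i] i by auto
        moreover have "finite (Bf i)" using finB Bf[of i] i by auto
        ultimately have "A = Bf i" using card_subset_eq by blast
        then show False using Bf[of i] i by auto
      qed
      define BB where "BB = Bf ` {..<Suc t}"
      have "contains_1_focal r F"
        unfolding contains_1_focal_def
      proof (intro exI conjI)
        show "A \<in> F" by (rule A)
        show "BB \<subseteq> F" unfolding BB_def using Bf by auto
        show "A \<notin> BB" unfolding BB_def using Bf by auto
        show "finite BB" unfolding BB_def by simp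
        show "card BB = r - 1" unfolding BB_def rt using card_image[OF inj] by simp
        show "one_focal A BB" unfolding one_focal_def
        proof
          fix x assume xA: "x \<in> A"
          show "card {S \<in> BB. x \<notin> S} \<le> 1"
          proof (cases "\<exists>j0<Suc t. x \<in> L!j0")
            case True
            then obtain j0 where j0: "j0 < Suc t" "x \<in> L!j0" by blast
            have "{S \<in> BB. x \<notin> S} \<subseteq> {Bf j0}"
            proof
              fix S assume "S \<in> {S \<in> BB. x \<notin> S}"
              then obtain j where j: "j < Suc t" "S = Bf j" "x \<notin> Bf j" unfolding BB_def by auto
              then have "x \<in> L!j" using Bf[of j] xA by auto
              then have "j = j0" using Ld[of j j0] j j0 by auto
              then show "S \<in> {Bf j0}" using j by simp
            qed
            then have "card {S \<in> BB. x \<notin> S} \<le> card {Bf j0}" by (intro card_mono) simp_all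
            then show ?thesis by simp
          next
            case False
            have e0: "{S \<in> BB. x \<notin> S} = {}"
            proof (rule ccontr)
              assume "{S \<in> BB. x \<notin> S} \<noteq> {}"
              then obtain j where j: "j < Suc t" "x \<notin> Bf j" unfolding BB_def by auto
              then have "x \<in> L!j" using Bf[of j] xA by auto
              then show False using False j by blast
            qed
            show ?thesis unfolding e0 by simp
          qed
        qed
      qed
      then show False using nf by simp
    qed
  qed
  then show ?thesis unfolding Ow_def using cA rt by simp
qed


lemma fam_bound:
  assumes r: "r \<ge> 3" and F: "F \<subseteq> k_subsets n k" and nf: "\<not> contains_1_focal r F"
    and s: "s = k div (r - 1)" and m: "m = k - s"
  shows "card F * (k choose m) \<le> (r - 1) * (n choose m)"
proof -
  define Ow where "Ow A = {U. U \<subseteq> A \<and> card U = s \<and> (\<forall>B\<in>F. A - U \<subseteq> B \<longrightarrow> B = A)}" for A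
  define Own where "Own A = (\<lambda>U. A - U) ` Ow A" for A
  have Fsub: "\<And>B. B \<in> F \<Longrightarrow> B \<subseteq> {1..n} \<and> card B = k" using F by (auto simp: k_subsets_def)
  have finB: "\<And>B. B \<in> F \<Longrightarrow> finite B" using Fsub finite_subset by blast
  have finK: "finite (k_subsets n k)"
    by (rule finite_subset[of _ "Pow {1..n}"]) (auto simp: k_subsets_def)
  have finF: "finite F" using finite_subset[OF F finK] .
  have sk: "s \<le> k" unfolding s by simp
  have ckm: "k choose m = k choose s" unfolding m using binomial_symmetric[OF sk] by simp
  have cOw: "card (Own A) = card (Ow A)" if A: "A \<in> F" for A
    unfolding Own_def
  proof (rule card_image, rule inj_onI)
    fix U U' assume "U \<in> Ow A" "U' \<in> Ow A" "A - U = A - U'"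
    then show "U = U'" unfolding Ow_def by blast
  qed
  have finOw: "finite (Ow A)" if A: "A \<in> F" for A
    by (rule finite_subset[of _ "Pow A"]) (use finB[OF A] in \<open>auto simp: Ow_def\<close>)
  have OwnK: "Own A \<subseteq> k_subsets n m" if A: "A \<in> F" for A
  proof
    fix T assume "T \<in> Own A"
    then obtain U where U: "U \<subseteq> A" "card U = s" and T: "T = A - U" unfolding Own_def Ow_def by blast
    have "card T = k - s" unfolding T using card_Diff_subset[of U A] U finB[OF A] Fsub[OF A]
      by (metis finite_subset)
    then show "T \<in> k_subsets n m" using Fsub[OF A] T m by (auto simp: k_subsets_def)
  qed
  have disj: "Own A \<inter> Own A' = {}" if "A \<in> F" "A' \<in> F" "A \<noteq> A'" for A A'
  proof (rule ccontr)
    assume "Own A \<inter> Own A' \<noteq> {}"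
    then obtain T where T1: "T \<in> Own A" and T2: "T \<in> Own A'" by blast
    from T1 obtain U where U: "T = A - U" "\<forall>B\<in>F. A - U \<subseteq> B \<longrightarrow> B = A"
      unfolding Own_def Ow_def by blast
    from T2 have "T \<subseteq> A'" unfolding Own_def by blast
    then show False using U that by blast
  qed
  have "card F * (k choose m) = (\<Sum>A\<in>F. k choose s)" using ckm by simp
  also have "\<dots> \<le> (\<Sum>A\<in>F. (r - 1) * card (Own A))"
  proof (rule sum_mono)
    fix A assume A: "A \<in> F"
    show "k choose s \<le> (r - 1) * card (Own A)"
      using own_count[OF r F nf A s] cOw[OF A] unfolding Ow_def by simp
  qed
  also have "\<dots> = (r - 1) * (\<Sum>A\<in>F. card (Own A))" by (simp add: sum_distrib_left)
  also have "(\<Sum>A\<in>F. card (Own A)) = card (\<Union>A\<in>F. Own A)"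
    by (rule card_UN_disjoint[symmetric]) (use finF finOw cOw disj Own_def in auto)
  also have "card (\<Union>A\<in>F. Own A) \<le> card (k_subsets n m)"
  proof (rule card_mono)
    show "finite (k_subsets n m)"
      by (rule finite_subset[of _ "Pow {1..n}"]) (auto simp: k_subsets_def)
    show "(\<Union>A\<in>F. Own A) \<subseteq> k_subsets n m" using OwnK by blast
  qed
  also have "card (k_subsets n m) = n choose m"
    unfolding k_subsets_def using n_subsets[of "{1..n}" m] by simp
  finally show ?thesis by simp
qed

theorem theorem5p2:
  fixes r n k :: nat
  assumes "r \<ge> 3" and "k \<le> n"
  defines "m \<equiv> nat \<lceil>real ((r - 2) * k) / real (r - 1)\<rceil>"
  shows "real (g_1ff r n k) \<le> real (r - 1) * real (n choose m) / real (k choose m)"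
proof -
  have m: "m = k - k div (r - 1)" unfolding m_def using m_eq[OF assms(1)] by simp
  have mk: "m \<le> k" using m by simp
  have kpos: "real (k choose m) > 0" using mk by simp
  define S where "S = {card F | F. F \<subseteq> k_subsets n k \<and> \<not> contains_1_focal r F}"
  have finK: "finite (k_subsets n k)"
    by (rule finite_subset[of _ "Pow {1..n}"]) (auto simp: k_subsets_def)
  have "S \<subseteq> card ` Pow (k_subsets n k)" unfolding S_def by auto
  then have finS: "finite S" using finK finite_subset by blast
  have "({}::nat set set) \<subseteq> k_subsets n k \<and> \<not> contains_1_focal r {}"
    by (simp add: contains_1_focal_def)
  then have "card ({}::nat set set) \<in> S" unfolding S_def by blast
  then have neS: "S \<noteq> {}" by blast
  have "Max S \<in> S" using Max_in[OF finS neS] .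
  then obtain F where F: "F \<subseteq> k_subsets n k" "\<not> contains_1_focal r F" and g: "g_1ff r n k = card F"
    unfolding S_def g_1ff_def by auto
  have "card F * (k choose m) \<le> (r - 1) * (n choose m)"
    by (rule fam_bound[OF assms(1) F refl m])
  then have "real (card F) * real (k choose m) \<le> real (r - 1) * real (n choose m)"
    by (metis of_nat_le_iff of_nat_mult)
  then show ?thesis unfolding g using kpos by (simp add: pos_le_divide_eq)
qed

end
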